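(* Consider the following MIMO flat-fading model. Fix integers $l_{\mathrm t},l_{\mathrm r},n\ge1$, a known pilot matrix $S=[s_{t,k}]\in\mathbb{C}^{n\times l_{\mathrm t}}$, channel prior $\vec{\mathbf h}\sim\mathcal{CN}(\vec\mu_{\vec{\mathbf h}},\Sigma_{\vec{\mathbf h}})$ with $\Sigma_{\vec{\mathbf h}}$ positive definite, frequency offset prior $\mathbf f_\delta\sim\mathcal N(\mu_{\mathbf f_\delta},\sigma^2_{\mathbf f_\delta})$, and i.i.d. $\mathcal{CN}(0,1)$ noise, mutually independent, with observations $y_{r,k}=e^{j2\pi\mathbf f_\delta(k-1)}\sum_t s_{t,k}h_{r,t}+n_{r,k}$. For a given observation $\vec y$ and $k=1,\dots,n-1$ define $$z_k=\sum_{r,t}s_{t,k+1}y_{r,k+1}^*b_{r,t}+\sum_{k_1=k+1}^{n}\sum_{r_1,t_1,r_2,t_2}a_{r_1,t_1,r_2,t_2}\,s_{t_1,k_1}s^*_{t_2,k_1-k}\,y_{r_2,k_1-k}\,y^*_{r_1,k_1},$$ and write $z_k=r_ke^{-j\theta_k}$ with $r_k\ge0$, $\theta_k\in\mathbb R$. Then $$\frac{\partial g(\vec y,f_\delta)}{\partial f_\delta}=-4\pi\,\mathrm{Im}\Big[\sum_{k=1}^{n-1}e^{j2\pi f_\delta k}\,k\,r_ke^{-j\theta_k}\Big]-\sigma_{\mathbf f_\delta}^{-2}(f_\delta-\mu_{\mathbf f_\delta})=-4\pi\sum_{k=1}^{n-1}k\,r_k\sin\!\Big(2\pi k\Big(f_\delta-\frac{\theta_k}{2\pi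 k}\Big)\Big)-\sigma_{\mathbf f_\delta}^{-2}(f_\delta-\mu_{\mathbf f_\delta}),$$ and the optimal solution $f_\delta$ of the MAP frequency offset estimation problem $\max_{f_\delta}f_{\vec{\mathbf y}|\mathbf f_\delta}(\vec y|f_\delta)f_{\mathbf f_\delta}(f_\delta)$ (equivalently $\max_{f_\delta}g(\vec y,f_\delta)$) satisfies $\frac{\partial g(\vec y,f_\delta)}{\partial f_\delta}=0$.
   Context: Sums over $r,r_1,r_2$ range over $1..l_{\mathrm r}$ and over $t,t_1,t_2$ over $1..l_{\mathrm t}$; ${}^*$ is complex conjugation. $\vec{\mathbf h}$ stacks $h_{r,t}$ in position $(r-1)l_{\mathrm t}+t$; $\vec y$ stacks $y_{r,k}$ in position $(r-1)n+k$. $F(f)=\mathrm{diag}(e^{j2\pi f(k-1)})_{k=1..n}$, $X(f)=F(f)S$, $\grave X(f)=I_{l_{\mathrm r}}\otimes X(f)$, $\grave S=I_{l_{\mathrm r}}\otimes S$. $A=(\grave S^\dagger\grave S+\Sigma_{\vec{\mathbf h}}^{-1})^{-1}$ with $a_{r_1,t_1,r_2,t_2}$ its entry in row $(r_1-1)l_{\mathrm t}+t_1$ and column $(r_2-1)l_{\mathrm t}+t_2$; $\vec b=(I-A\grave S^\dagger\grave S)\vec\mu_{\vec{\mathbf h}}$ with $b_{r,t}$ its entry in position $(r-1)l_{\mathrm t}+t$. $g(\vec y,f_\delta)=2\,\mathrm{Re}[\vec b^\dagger\grave X(f_\delta)^\dagger\vec y]+(\grave X(f_\delta)^\dagger\vec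 y)^\dagger A(\grave X(f_\delta)^\dagger\vec y)-\frac12\sigma_{\mathbf f_\delta}^{-2}|f_\delta-\mu_{\mathbf f_\delta}|^2$. *)

theory Defs
  imports "HOL-Analysis.Analysis"
begin

text \<open>Receive antennas r range over {1..lr}, transmit antennas t over {1..lt},
  time indices k over {1..n} (1-based, as in the paper). A channel vector h (stacked at
  position (r-1)lt+t in the paper) is represented as a function on index pairs (r,t) in
  the index set chan_idx lr lt; an (lr lt) x (lr lt) matrix is a function of two such pairs.
  The pilot matrix S is s t k (= entry s_{t,k}); the observation is y r k (= y_{r,k}).\<close>

definition chan_idx :: "nat \<Rightarrow> nat \<Rightarrow> (nat \<times> nat) set" where
  "chan_idx lr lt = {1..lr} \<times> {1..lt}"

definition herm_pos_def :: "'i set \<Rightarrow> ('i \<Rightarrow> 'i \<Rightarrow> complex) \<Rightarrow> bool" where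
  "herm_pos_def I M \<longleftrightarrow>
     (\<forall>p\<in>I. \<forall>q\<in>I. M p q = cnj (M q p)) \<and>
     (\<forall>v. (\<exists>p\<in>I. v p \<noteq> 0) \<longrightarrow> Re (\<Sum>p\<in>I. \<Sum>q\<in>I. cnj (v p) * M p q * v q) > 0)"

definition inv_on :: "'i set \<Rightarrow> ('i \<Rightarrow> 'i \<Rightarrow> complex) \<Rightarrow> ('i \<Rightarrow> 'i \<Rightarrow> complex)" where
  "inv_on I M = (THE B. (\<forall>p q. (p \<notin> I \<or> q \<notin> I) \<longrightarrow> B p q = 0) \<and>
       (\<forall>p\<in>I. \<forall>q\<in>I. (\<Sum>l\<in>I. M p l * B l q) = (if p = q then 1 else 0)) \<and>
       (\<forall>p\<in>I. \<forall>q\<in>I. (\<Sum>l\<in>I. B p l * M l q) = (if p = q then 1 else 0)))"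

text \<open>Gram matrix (I_lr \<otimes> S)^\<dagger> (I_lr \<otimes> S), entry at ((r1,t1),(r2,t2)).\<close>
definition gramS :: "nat \<Rightarrow> (nat \<Rightarrow> nat \<Rightarrow> complex) \<Rightarrow> nat \<times> nat \<Rightarrow> nat \<times> nat \<Rightarrow> complex" where
  "gramS n s p q = (if fst p = fst q then (\<Sum>k=1..n. cnj (s (snd p) k) * s (snd q) k) else 0)"

definition Amat :: "nat \<Rightarrow> nat \<Rightarrow> nat \<Rightarrow> (nat \<Rightarrow> nat \<Rightarrow> complex)
    \<Rightarrow> (nat \<times> nat \<Rightarrow> nat \<times> nat \<Rightarrow> complex) \<Rightarrow> nat \<times> nat \<Rightarrow> nat \<times> nat \<Rightarrow> complex" where
  "Amat lr lt n s Sig = inv_on (chan_idx lr lt)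
      (\<lambda>p q. gramS n s p q + inv_on (chan_idx lr lt) Sig p q)"

definition bvec :: "nat \<Rightarrow> nat \<Rightarrow> nat \<Rightarrow> (nat \<Rightarrow> nat \<Rightarrow> complex)
    \<Rightarrow> (nat \<times> nat \<Rightarrow> nat \<times> nat \<Rightarrow> complex) \<Rightarrow> (nat \<times> nat \<Rightarrow> complex) \<Rightarrow> nat \<times> nat \<Rightarrow> complex" where
  "bvec lr lt n s Sig mu p = (\<Sum>q\<in>chan_idx lr lt.
      ((if p = q then 1 else 0) - (\<Sum>l\<in>chan_idx lr lt. Amat lr lt n s Sig p l * gramS n s l q)) * mu q)"

text \<open>(I_lr \<otimes> X(f))^\<dagger> y, entry at (r,t), where X(f) = F(f) S.\<close>
definition Xhy :: "nat \<Rightarrow> (nat \<Rightarrow> nat \<Rightarrow> complex) \<Rightarrow> (nat \<Rightarrow> nat \<Rightarrow> complex) \<Rightarrow> real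
    \<Rightarrow> nat \<times> nat \<Rightarrow> complex" where
  "Xhy n s y f p = (\<Sum>k=1..n. cnj (exp (\<i> * complex_of_real (2 * pi * f * real (k - 1))) * s (snd p) k)
                             * y (fst p) k)"

text \<open>The objective g(y,f). The quadratic form term is real (A is Hermitian); we take its real
  part so that g is real-valued. sf2 is the prior variance \<sigma>^2 of the frequency offset.\<close>
definition gfun :: "nat \<Rightarrow> nat \<Rightarrow> nat \<Rightarrow> (nat \<Rightarrow> nat \<Rightarrow> complex)
    \<Rightarrow> (nat \<times> nat \<Rightarrow> nat \<times> nat \<Rightarrow> complex) \<Rightarrow> (nat \<times> nat \<Rightarrow> complex) \<Rightarrow> real \<Rightarrow> real
    \<Rightarrow> (nat \<Rightarrow> nat \<Rightarrow> complex) \<Rightarrow> real \<Rightarrow> real" where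
  "gfun lr lt n s Sig mu muf sf2 y f =
     2 * Re (\<Sum>p\<in>chan_idx lr lt. cnj (bvec lr lt n s Sig mu p) * Xhy n s y f p)
   + Re (\<Sum>p\<in>chan_idx lr lt. \<Sum>q\<in>chan_idx lr lt.
           cnj (Xhy n s y f p) * Amat lr lt n s Sig p q * Xhy n s y f q)
   - 1/2 * (1 / sf2) * \<bar>f - muf\<bar>^2"

definition zcoef :: "nat \<Rightarrow> nat \<Rightarrow> nat \<Rightarrow> (nat \<Rightarrow> nat \<Rightarrow> complex)
    \<Rightarrow> (nat \<times> nat \<Rightarrow> nat \<times> nat \<Rightarrow> complex) \<Rightarrow> (nat \<times> nat \<Rightarrow> complex)
    \<Rightarrow> (nat \<Rightarrow> nat \<Rightarrow> complex) \<Rightarrow> nat \<Rightarrow> complex" where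
  "zcoef lr lt n s Sig mu y k =
     (\<Sum>p\<in>chan_idx lr lt. s (snd p) (k + 1) * cnj (y (fst p) (k + 1)) * bvec lr lt n s Sig mu p)
   + (\<Sum>k1=k+1..n. \<Sum>p\<in>chan_idx lr lt. \<Sum>q\<in>chan_idx lr lt.
        Amat lr lt n s Sig p q * s (snd p) k1 * cnj (s (snd q) (k1 - k))
        * y (fst q) (k1 - k) * cnj (y (fst p) k1))"

end

theory Submission
  imports Defs "Jordan_Normal_Form.Determinant"
begin

definition is_inv :: "'i set \<Rightarrow> ('i \<Rightarrow> 'i \<Rightarrow> complex) \<Rightarrow> ('i \<Rightarrow> 'i \<Rightarrow> complex) \<Rightarrow> bool" where
  "is_inv I M B \<longleftrightarrow> (\<forall>p q. (p \<notin> I \<or> q \<notin> I) \<longrightarrow> B p q = 0) \<and>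
       (\<forall>p\<in>I. \<forall>q\<in>I. (\<Sum>l\<in>I. M p l * B l q) = (if p = q then 1 else 0)) \<and>
       (\<forall>p\<in>I. \<forall>q\<in>I. (\<Sum>l\<in>I. B p l * M l q) = (if p = q then 1 else 0))"

lemma inv_unique:
  assumes fin: "finite I" and B: "is_inv I M B" and C: "is_inv I M C"
  shows "B = C"
proof (intro ext)
  fix p q
  show "B p q = C p q"
  proof (cases "p \<in> I \<and> q \<in> I")
    case False thus ?thesis using B C unfolding is_inv_def by auto
  next
    case True
    hence pI: "p \<in> I" and qI: "q \<in> I" by auto
    have "(\<Sum>l\<in>I. (if p = l then 1 else 0) * B l q) = (\<Sum>l\<in>I. if p = l then B l q else 0)"
      by (intro sum.cong) auto
    hence "B p q = (\<Sum>l\<in>I. (if p = l then 1 else 0) * B l q)"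
      using pI fin by (simp add: sum.delta)
    also have "\<dots> = (\<Sum>l\<in>I. (\<Sum>m\<in>I. C p m * M m l) * B l q)"
      using C pI unfolding is_inv_def by (intro sum.cong) auto
    also have "\<dots> = (\<Sum>m\<in>I. C p m * (\<Sum>l\<in>I. M m l * B l q))"
      unfolding sum_distrib_left sum_distrib_right mult.assoc by (rule sum.swap)
    also have "\<dots> = (\<Sum>m\<in>I. C p m * (if m = q then 1 else 0))"
      using B qI unfolding is_inv_def by (intro sum.cong) auto
    also have "\<dots> = C p q" using qI fin by (simp add: if_distrib sum.delta cong: if_cong)
    finally show ?thesis .
  qed
qed

lemma inv_exists:
  assumes fin: "finite I" and pd: "herm_pos_def I M"
  shows "\<exists>B. is_inv I M B"
proof -
  define N where "N = card I"
  obtain h where h: "bij_betw h {0..<N} I" using ex_bij_betw_nat_finite[OF fin] N_def by auto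
  define g where "g = inv_into {0..<N} h"
  have hg: "\<And>p. p \<in> I \<Longrightarrow> h (g p) = p" unfolding g_def using h
    by (meson bij_betw_inv_into_right)
  have gh: "\<And>i. i < N \<Longrightarrow> g (h i) = i" unfolding g_def using h
    by (simp add: bij_betw_imp_inj_on inv_into_f_f)
  have gN: "\<And>p. p \<in> I \<Longrightarrow> g p < N" unfolding g_def using h
    by (metis atLeastLessThan_iff bij_betw_def inv_into_into)
  have ginj: "\<And>p q. p \<in> I \<Longrightarrow> q \<in> I \<Longrightarrow> g p = g q \<longleftrightarrow> p = q" using hg by metis
  have hI: "\<And>i. i < N \<Longrightarrow> h i \<in> I" using h by (auto simp: bij_betw_def)
  define Mm where "Mm = mat N N (\<lambda>(i,j). M (h i) (h j))"
  have Mc: "Mm \<in> carrier_mat N N" unfolding Mm_def by auto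
  have "det Mm \<noteq> 0"
  proof
    assume "det Mm = 0"
    then obtain v where v: "v \<in> carrier_vec N" "v \<noteq> 0\<^sub>v N" "Mm *\<^sub>v v = 0\<^sub>v N"
      using det_0_iff_vec_prod_zero[OF Mc] by auto
    have "\<exists>i<N. v $ i \<noteq> 0"
    proof (rule ccontr)
      assume "\<not> (\<exists>i<N. v $ i \<noteq> 0)"
      hence "v = 0\<^sub>v N" using v(1) by (intro eq_vecI) auto
      thus False using v(2) by simp
    qed
    then obtain i where i: "i < N" "v $ i \<noteq> 0" by blast
    define w where "w p = v $ g p" for p
    have "\<exists>p\<in>I. w p \<noteq> 0" using i hI gh unfolding w_def by (intro bexI[of _ "h i"]) auto
    hence pos: "Re (\<Sum>p\<in>I. \<Sum>q\<in>I. cnj (w p) * M p q * w q) > 0" using pd unfolding herm_pos_def_def by blast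
    have "(\<Sum>p\<in>I. \<Sum>q\<in>I. cnj (w p) * M p q * w q) = (\<Sum>i\<in>{0..<N}. \<Sum>q\<in>I. cnj (w (h i)) * M (h i) q * w q)"
      by (rule sum.reindex_bij_betw[OF h, symmetric])
    also have "\<dots> = (\<Sum>i\<in>{0..<N}. \<Sum>j\<in>{0..<N}. cnj (w (h i)) * M (h i) (h j) * w (h j))"
      by (intro sum.cong refl) (rule sum.reindex_bij_betw[OF h, symmetric])
    also have "\<dots> = (\<Sum>i\<in>{0..<N}. cnj (v $ i) * (Mm *\<^sub>v v) $ i)"
    proof (intro sum.cong refl)
      fix i assume "i \<in> {0..<N}"
      hence i: "i < N" by simp
      have rowi: "(Mm *\<^sub>v v) $ i = (\<Sum>j\<in>{0..<N}. M (h i) (h j) * v $ j)"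
        using v(1) i by (auto simp: Mm_def scalar_prod_def intro!: sum.cong)
      show "(\<Sum>j\<in>{0..<N}. cnj (w (h i)) * M (h i) (h j) * w (h j)) = cnj (v $ i) * (Mm *\<^sub>v v) $ i"
        unfolding rowi sum_distrib_left using i by (auto simp: w_def gh mult.assoc intro!: sum.cong)
    qed
    also have "\<dots> = 0" using v(3) by simp
    finally show False using pos by simp
  qed
  then have "Mm \<in> Units (ring_mat TYPE(complex) N ())" by (rule det_non_zero_imp_unit[OF Mc])
  then obtain Q where Q: "Q \<in> carrier_mat N N" "Q * Mm = 1\<^sub>m N" "Mm * Q = 1\<^sub>m N"
    unfolding Units_def ring_mat_def by auto
  define B where "B p q = (if p \<in> I \<and> q \<in> I then Q $$ (g p, g q) else 0)" for p q
  have MQ: "(Mm * Q) $$ (a, c) = (\<Sum>j\<in>{0..<N}. M (h a) (h j) * Q $$ (j, c))" if "a < N" "c < N" for a c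
    using that Q(1) by (auto simp: Mm_def scalar_prod_def intro!: sum.cong)
  have QM: "(Q * Mm) $$ (a, c) = (\<Sum>j\<in>{0..<N}. Q $$ (a, j) * M (h j) (h c))" if "a < N" "c < N" for a c
    using that Q(1) by (auto simp: Mm_def scalar_prod_def intro!: sum.cong)
  have 1: "(\<Sum>l\<in>I. M p l * B l q) = (if p = q then 1 else 0)" if "p \<in> I" "q \<in> I" for p q
  proof -
    have "(\<Sum>l\<in>I. M p l * B l q) = (\<Sum>j\<in>{0..<N}. M p (h j) * B (h j) q)"
      by (rule sum.reindex_bij_betw[OF h, symmetric])
    also have "\<dots> = (\<Sum>j\<in>{0..<N}. M (h (g p)) (h j) * Q $$ (j, g q))"
      using that by (intro sum.cong refl) (auto simp: B_def hI gh hg)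
    also have "\<dots> = (Mm * Q) $$ (g p, g q)"
      using that gN by (simp add: MQ)
    also have "\<dots> = (if p = q then 1 else 0)" using Q(3) that gN ginj by auto
    finally show ?thesis .
  qed
  have 2: "(\<Sum>l\<in>I. B p l * M l q) = (if p = q then 1 else 0)" if "p \<in> I" "q \<in> I" for p q
  proof -
    have "(\<Sum>l\<in>I. B p l * M l q) = (\<Sum>j\<in>{0..<N}. B p (h j) * M (h j) q)"
      by (rule sum.reindex_bij_betw[OF h, symmetric])
    also have "\<dots> = (\<Sum>j\<in>{0..<N}. Q $$ (g p, j) * M (h j) (h (g q)))"
      using that by (intro sum.cong refl) (auto simp: B_def hI gh hg)
    also have "\<dots> = (Q * Mm) $$ (g p, g q)"
      using that gN by (simp add: QM)
    also have "\<dots> = (if p = q then 1 else 0)" using Q(2) that gN ginj by auto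
    finally show ?thesis .
  qed
  have "is_inv I M B" unfolding is_inv_def using 1 2 by (auto simp: B_def)
  thus ?thesis by blast
qed


lemma inv_on_is_inv:
  assumes fin: "finite I" and pd: "herm_pos_def I M"
  shows "is_inv I M (inv_on I M)"
proof -
  have eq: "inv_on I M = (THE B. is_inv I M B)" unfolding inv_on_def is_inv_def ..
  have "\<exists>!B. is_inv I M B" using inv_exists[OF fin pd] inv_unique[OF fin] by blast
  thus ?thesis unfolding eq by (rule theI')
qed

lemma inv_on_herm:
  assumes fin: "finite I" and pd: "herm_pos_def I M" and pI: "p \<in> I" and qI: "q \<in> I"
  shows "inv_on I M p q = cnj (inv_on I M q p)"
proof -
  define B where "B = inv_on I M"
  have B: "is_inv I M B" unfolding B_def by (rule inv_on_is_inv[OF fin pd])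
  have herm: "\<And>p q. p \<in> I \<Longrightarrow> q \<in> I \<Longrightarrow> M p q = cnj (M q p)" using pd unfolding herm_pos_def_def by blast
  define B' where "B' p q = cnj (B q p)" for p q
  have "is_inv I M B'"
    unfolding is_inv_def
  proof (intro conjI ballI allI impI)
    fix p q assume "p \<notin> I \<or> q \<notin> I" thus "B' p q = 0" using B unfolding is_inv_def B'_def by auto
  next
    fix p q assume pI: "p \<in> I" and qI: "q \<in> I"
    have "(\<Sum>l\<in>I. M p l * B' l q) = cnj (\<Sum>l\<in>I. B q l * M l p)"
      unfolding B'_def cnj_sum using pI by (intro sum.cong refl) (simp add: herm[of _ p] mult.commute)
    also have "\<dots> = (if p = q then 1 else 0)" using B pI qI unfolding is_inv_def by auto
    finally show "(\<Sum>l\<in>I. M p l * B' l q) = (if p = q then 1 else 0)" .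
    have "(\<Sum>l\<in>I. B' p l * M l q) = cnj (\<Sum>l\<in>I. M q l * B l p)"
      unfolding B'_def cnj_sum using qI by (intro sum.cong refl) (simp add: herm[of q] mult.commute)
    also have "\<dots> = (if p = q then 1 else 0)" using B pI qI unfolding is_inv_def by auto
    finally show "(\<Sum>l\<in>I. B' p l * M l q) = (if p = q then 1 else 0)" .
  qed
  hence "B = B'" using inv_unique[OF fin B] by blast
  hence "B p q = cnj (B q p)" unfolding B'_def by metis
  thus ?thesis unfolding B_def .
qed

lemma inv_on_pd:
  assumes fin: "finite I" and pd: "herm_pos_def I M"
  shows "herm_pos_def I (inv_on I M)"
proof -
  define B where "B = inv_on I M"
  have B: "is_inv I M B" unfolding B_def by (rule inv_on_is_inv[OF fin pd])
  have herm: "\<And>p q. p \<in> I \<Longrightarrow> q \<in> I \<Longrightarrow> M p q = cnj (M q p)" using pd unfolding herm_pos_def_def by blast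
  have posM: "\<And>w. (\<exists>p\<in>I. w p \<noteq> 0) \<Longrightarrow> Re (\<Sum>p\<in>I. \<Sum>q\<in>I. cnj (w p) * M p q * w q) > 0"
    using pd unfolding herm_pos_def_def by blast
  have "Re (\<Sum>p\<in>I. \<Sum>q\<in>I. cnj (v p) * B p q * v q) > 0" if nz: "\<exists>p\<in>I. v p \<noteq> 0" for v
  proof -
    define w where "w p = (\<Sum>q\<in>I. B p q * v q)" for p
    have vw: "v p = (\<Sum>l\<in>I. M p l * w l)" if pI: "p \<in> I" for p
    proof -
      have "(\<Sum>l\<in>I. M p l * w l) = (\<Sum>l\<in>I. \<Sum>q\<in>I. M p l * B l q * v q)"
        unfolding w_def sum_distrib_left mult.assoc ..
      also have "\<dots> = (\<Sum>q\<in>I. (\<Sum>l\<in>I. M p l * B l q) * v q)"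
        unfolding sum_distrib_right by (rule sum.swap)
      also have "\<dots> = (\<Sum>q\<in>I. (if p = q then v q else 0))"
        using B pI unfolding is_inv_def by (intro sum.cong) auto
      also have "\<dots> = v p" using fin pI by (simp add: sum.delta)
      finally show ?thesis by simp
    qed
    have wnz: "\<exists>p\<in>I. w p \<noteq> 0"
    proof (rule ccontr)
      assume "\<not> ?thesis"
      hence "\<forall>p\<in>I. v p = 0" using vw by simp
      thus False using nz by blast
    qed
    have "(\<Sum>p\<in>I. \<Sum>q\<in>I. cnj (v p) * B p q * v q) = (\<Sum>p\<in>I. cnj (v p) * w p)"
      unfolding w_def sum_distrib_left mult.assoc ..
    also have "\<dots> = (\<Sum>p\<in>I. \<Sum>l\<in>I. cnj (w l) * M l p * w p)"
    proof (rule sum.cong[OF refl])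
      fix p assume pI: "p \<in> I"
      have "cnj (v p) = (\<Sum>l\<in>I. cnj (w l) * M l p)"
        unfolding vw[OF pI] cnj_sum
      proof (rule sum.cong[OF refl])
        fix l assume lI: "l \<in> I"
        show "cnj (M p l * w l) = cnj (w l) * M l p" by (simp add: herm[OF lI pI] mult.commute)
      qed
      thus "cnj (v p) * w p = (\<Sum>l\<in>I. cnj (w l) * M l p * w p)" by (simp add: sum_distrib_right)
    qed
    also have "\<dots> = (\<Sum>l\<in>I. \<Sum>p\<in>I. cnj (w l) * M l p * w p)" by (rule sum.swap)
    finally show ?thesis using posM[OF wnz] by simp
  qed
  moreover have "\<forall>p\<in>I. \<forall>q\<in>I. B p q = cnj (B q p)" unfolding B_def using inv_on_herm[OF fin pd] by blast
  ultimately show ?thesis unfolding herm_pos_def_def B_def by blast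
qed

lemma pd_add_psd:
  assumes pd: "herm_pos_def I S"
    and gh: "\<forall>p\<in>I. \<forall>q\<in>I. G p q = cnj (G q p)"
    and gp: "\<And>v. Re (\<Sum>p\<in>I. \<Sum>q\<in>I. cnj (v p) * G p q * v q) \<ge> 0"
  shows "herm_pos_def I (\<lambda>p q. G p q + S p q)"
  unfolding herm_pos_def_def
proof (intro conjI ballI allI impI)
  fix p q assume "p \<in> I" "q \<in> I"
  moreover have "S p q = cnj (S q p)" using pd \<open>p \<in> I\<close> \<open>q \<in> I\<close> unfolding herm_pos_def_def by blast
  moreover have "G p q = cnj (G q p)" using gh \<open>p \<in> I\<close> \<open>q \<in> I\<close> by blast
  ultimately show "G p q + S p q = cnj (G q p + S q p)" by simp
next
  fix v :: "'a \<Rightarrow> complex" assume "\<exists>p\<in>I. v p \<noteq> 0"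
  hence "Re (\<Sum>p\<in>I. \<Sum>q\<in>I. cnj (v p) * S p q * v q) > 0" using pd unfolding herm_pos_def_def by blast
  moreover have "(\<Sum>p\<in>I. \<Sum>q\<in>I. cnj (v p) * (G p q + S p q) * v q) =
     (\<Sum>p\<in>I. \<Sum>q\<in>I. cnj (v p) * G p q * v q) + (\<Sum>p\<in>I. \<Sum>q\<in>I. cnj (v p) * S p q * v q)"
    by (simp add: distrib_left distrib_right sum.distrib)
  ultimately show "Re (\<Sum>p\<in>I. \<Sum>q\<in>I. cnj (v p) * (G p q + S p q) * v q) > 0" using gp[of v] by simp
qed

lemma gram_herm: "gramS n s p q = cnj (gramS n s q p)"
  unfolding gramS_def by (auto simp: mult.commute)

lemma gram_psd:
  "Re (\<Sum>p\<in>chan_idx lr lt. \<Sum>q\<in>chan_idx lr lt. cnj (v p) * gramS n s p q * v q) \<ge> 0"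
proof -
  define u where "u r k = (\<Sum>t\<in>{1..lt}. s t k * v (r, t))" for r k
  have cp: "\<And>F. (\<Sum>p\<in>chan_idx lr lt. F p) = (\<Sum>r\<in>{1..lr}. \<Sum>t\<in>{1..lt}. F (r,t))"
    unfolding chan_idx_def by (simp add: sum.cartesian_product)
  have "(\<Sum>p\<in>chan_idx lr lt. \<Sum>q\<in>chan_idx lr lt. cnj (v p) * gramS n s p q * v q)
      = (\<Sum>r1\<in>{1..lr}. \<Sum>t1\<in>{1..lt}. \<Sum>r2\<in>{1..lr}. \<Sum>t2\<in>{1..lt}.
           cnj (v (r1,t1)) * gramS n s (r1,t1) (r2,t2) * v (r2,t2))"
    by (simp only: cp)
  also have "\<dots> = (\<Sum>r1\<in>{1..lr}. \<Sum>t1\<in>{1..lt}. \<Sum>t2\<in>{1..lt}. \<Sum>r2\<in>{1..lr}.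
           cnj (v (r1,t1)) * gramS n s (r1,t1) (r2,t2) * v (r2,t2))"
    by (rule sum.cong[OF refl], rule sum.cong[OF refl], rule sum.swap)
  also have "\<dots> = (\<Sum>r\<in>{1..lr}. \<Sum>t1\<in>{1..lt}. \<Sum>t2\<in>{1..lt}.
           cnj (v (r,t1)) * (\<Sum>k=1..n. cnj (s t1 k) * s t2 k) * v (r,t2))"
  proof (rule sum.cong[OF refl], rule sum.cong[OF refl], rule sum.cong[OF refl])
    fix r1 t1 t2 assume r1: "r1 \<in> {1..lr}"
    have "(\<Sum>r2\<in>{1..lr}. cnj (v (r1,t1)) * gramS n s (r1,t1) (r2,t2) * v (r2,t2))
        = (\<Sum>r2\<in>{1..lr}. if r1 = r2 then cnj (v (r1,t1)) * (\<Sum>k=1..n. cnj (s t1 k) * s t2 k) * v (r2,t2) else 0)"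
      by (intro sum.cong refl) (simp add: gramS_def)
    also have "\<dots> = cnj (v (r1,t1)) * (\<Sum>k=1..n. cnj (s t1 k) * s t2 k) * v (r1,t2)"
      using r1 by (simp add: sum.delta)
    finally show "(\<Sum>r2\<in>{1..lr}. cnj (v (r1,t1)) * gramS n s (r1,t1) (r2,t2) * v (r2,t2))
        = cnj (v (r1,t1)) * (\<Sum>k=1..n. cnj (s t1 k) * s t2 k) * v (r1,t2)" .
  qed
  also have "\<dots> = (\<Sum>r\<in>{1..lr}. \<Sum>k=1..n. cnj (u r k) * u r k)"
  proof (rule sum.cong[OF refl])
    fix r
    have "(\<Sum>k=1..n. cnj (u r k) * u r k) = (\<Sum>k=1..n. \<Sum>t1\<in>{1..lt}. \<Sum>t2\<in>{1..lt}. cnj (v (r,t1)) * (cnj (s t1 k) * s t2 k) * v (r,t2))"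
      unfolding u_def cnj_sum sum_product by (intro sum.cong refl) (simp add: algebra_simps)
    also have "\<dots> = (\<Sum>t1\<in>{1..lt}. \<Sum>t2\<in>{1..lt}. \<Sum>k=1..n. cnj (v (r,t1)) * (cnj (s t1 k) * s t2 k) * v (r,t2))"
      by (rule trans[OF sum.swap], rule sum.cong[OF refl], rule sum.swap)
    also have "\<dots> = (\<Sum>t1\<in>{1..lt}. \<Sum>t2\<in>{1..lt}. cnj (v (r,t1)) * (\<Sum>k=1..n. cnj (s t1 k) * s t2 k) * v (r,t2))"
      by (simp add: sum_distrib_left sum_distrib_right)
    finally show "(\<Sum>t1\<in>{1..lt}. \<Sum>t2\<in>{1..lt}. cnj (v (r,t1)) * (\<Sum>k=1..n. cnj (s t1 k) * s t2 k) * v (r,t2)) = (\<Sum>k=1..n. cnj (u r k) * u r k)" by simp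
  qed
  finally have eq: "(\<Sum>p\<in>chan_idx lr lt. \<Sum>q\<in>chan_idx lr lt. cnj (v p) * gramS n s p q * v q) = (\<Sum>r\<in>{1..lr}. \<Sum>k=1..n. cnj (u r k) * u r k)" .
  have "Re (cnj (u r k) * u r k) \<ge> 0" for r k by (simp add: complex_mult_cnj[of "u r k", simplified mult.commute])
  thus ?thesis unfolding eq by (simp add: sum_nonneg)
qed

lemma A_herm:
  assumes "herm_pos_def (chan_idx lr lt) Sig" "p \<in> chan_idx lr lt" "q \<in> chan_idx lr lt"
  shows "Amat lr lt n s Sig p q = cnj (Amat lr lt n s Sig q p)"
proof -
  have fin: "finite (chan_idx lr lt)" unfolding chan_idx_def by simp
  have "herm_pos_def (chan_idx lr lt) (\<lambda>p q. gramS n s p q + inv_on (chan_idx lr lt) Sig p q)"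
    apply (rule pd_add_psd[OF inv_on_pd[OF fin assms(1)]])
     apply (intro ballI, rule gram_herm)
    apply (rule gram_psd)
    done
  thus ?thesis unfolding Amat_def using inv_on_herm[OF fin _ assms(2,3)] by blast
qed

lemma sum3: "(\<Sum>i\<in>A. a i) * (c::complex) * (\<Sum>j\<in>B. b j) = (\<Sum>i\<in>A. \<Sum>j\<in>B. a i * c * b j)"
proof -
  have "(\<Sum>i\<in>A. a i) * c * (\<Sum>j\<in>B. b j) = (\<Sum>i\<in>A. a i * c * (\<Sum>j\<in>B. b j))"
    by (simp add: sum_distrib_right)
  also have "\<dots> = (\<Sum>i\<in>A. \<Sum>j\<in>B. a i * c * b j)"
    by (simp add: sum_distrib_left)
  finally show ?thesis .
qed

lemma swap4: "(\<Sum>p\<in>P. \<Sum>q\<in>Q. \<Sum>i\<in>K1. \<Sum>j\<in>K2. (f p q i j :: complex)) = (\<Sum>i\<in>K1. \<Sum>j\<in>K2. \<Sum>p\<in>P. \<Sum>q\<in>Q. f p q i j)"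
proof -
  have "(\<Sum>p\<in>P. \<Sum>q\<in>Q. \<Sum>i\<in>K1. \<Sum>j\<in>K2. f p q i j) = (\<Sum>p\<in>P. \<Sum>i\<in>K1. \<Sum>q\<in>Q. \<Sum>j\<in>K2. f p q i j)"
    by (rule sum.cong[OF refl], rule sum.swap)
  also have "\<dots> = (\<Sum>i\<in>K1. \<Sum>p\<in>P. \<Sum>q\<in>Q. \<Sum>j\<in>K2. f p q i j)" by (rule sum.swap)
  also have "\<dots> = (\<Sum>i\<in>K1. \<Sum>p\<in>P. \<Sum>j\<in>K2. \<Sum>q\<in>Q. f p q i j)"
    by (rule sum.cong[OF refl], rule sum.cong[OF refl], rule sum.swap)
  also have "\<dots> = (\<Sum>i\<in>K1. \<Sum>j\<in>K2. \<Sum>p\<in>P. \<Sum>q\<in>Q. f p q i j)"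
    by (rule sum.cong[OF refl], rule sum.swap)
  finally show ?thesis .
qed

lemma sym_sum:
  fixes F :: "nat \<Rightarrow> nat \<Rightarrow> real"
  assumes sym: "\<And>a b. F a b = F b a" and diag: "\<And>a. F a a = 0"
  shows "(\<Sum>a=1..n. \<Sum>b=1..n. F a b) = 2 * (\<Sum>k=1..n-1. \<Sum>a=k+1..n. F a (a - k))"
proof (induction n)
  case 0
  then show ?case by simp
next
  case (Suc n)
  have L: "(\<Sum>a=1..Suc n. \<Sum>b=1..Suc n. F a b) = (\<Sum>a=1..n. \<Sum>b=1..n. F a b) + 2 * (\<Sum>b=1..n. F (Suc n) b)"
  proof -
    have "(\<Sum>a=1..Suc n. \<Sum>b=1..Suc n. F a b) = (\<Sum>a=1..n. \<Sum>b=1..Suc n. F a b) + (\<Sum>b=1..Suc n. F (Suc n) b)"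
      by simp
    also have "(\<Sum>a=1..n. \<Sum>b=1..Suc n. F a b) = (\<Sum>a=1..n. \<Sum>b=1..n. F a b) + (\<Sum>a=1..n. F a (Suc n))"
      by (simp add: sum.distrib)
    also have "(\<Sum>b=1..Suc n. F (Suc n) b) = (\<Sum>b=1..n. F (Suc n) b)"
      by (simp add: diag)
    also have "(\<Sum>a=1..n. F a (Suc n)) = (\<Sum>b=1..n. F (Suc n) b)"
      by (simp add: sym)
    finally show ?thesis by simp
  qed
  have R: "(\<Sum>k=1..Suc n - 1. \<Sum>a=k+1..Suc n. F a (a - k)) = (\<Sum>k=1..n-1. \<Sum>a=k+1..n. F a (a - k)) + (\<Sum>b=1..n. F (Suc n) b)"
  proof -
    have "(\<Sum>k=1..Suc n - 1. \<Sum>a=k+1..Suc n. F a (a - k)) = (\<Sum>k=1..n. (\<Sum>a=k+1..n. F a (a - k)) + F (Suc n) (Suc n - k))"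
      apply (simp only: diff_Suc_1)
      apply (rule sum.cong[OF refl])
      apply (subst sum.cl_ivl_Suc)
      apply auto
      done
    also have "\<dots> = (\<Sum>k=1..n. \<Sum>a=k+1..n. F a (a - k)) + (\<Sum>k=1..n. F (Suc n) (Suc n - k))"
      by (simp add: sum.distrib)
    also have "(\<Sum>k=1..n. \<Sum>a=k+1..n. F a (a - k)) = (\<Sum>k=1..n-1. \<Sum>a=k+1..n. F a (a - k))"
    proof (cases n)
      case 0 thus ?thesis by simp
    next
      case (Suc m) thus ?thesis by simp
    qed
    also have "(\<Sum>k=1..n. F (Suc n) (Suc n - k)) = (\<Sum>b=1..n. F (Suc n) b)"
      by (subst sum.atLeastAtMost_rev) (intro sum.cong refl, simp)
    finally show ?thesis .
  qed
  show ?case unfolding L R using Suc.IH by simp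
qed


definition betaK :: "nat \<Rightarrow> nat \<Rightarrow> nat \<Rightarrow> (nat \<Rightarrow> nat \<Rightarrow> complex)
    \<Rightarrow> (nat \<times> nat \<Rightarrow> nat \<times> nat \<Rightarrow> complex) \<Rightarrow> (nat \<times> nat \<Rightarrow> complex)
    \<Rightarrow> (nat \<Rightarrow> nat \<Rightarrow> complex) \<Rightarrow> nat \<Rightarrow> complex" where
  "betaK lr lt n s Sig mu y k = (\<Sum>p\<in>chan_idx lr lt. bvec lr lt n s Sig mu p * s (snd p) k * cnj (y (fst p) k))"

definition Ck :: "nat \<Rightarrow> nat \<Rightarrow> nat \<Rightarrow> (nat \<Rightarrow> nat \<Rightarrow> complex)
    \<Rightarrow> (nat \<times> nat \<Rightarrow> nat \<times> nat \<Rightarrow> complex)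
    \<Rightarrow> (nat \<Rightarrow> nat \<Rightarrow> complex) \<Rightarrow> nat \<Rightarrow> nat \<Rightarrow> complex" where
  "Ck lr lt n s Sig y k1 k2 = (\<Sum>p\<in>chan_idx lr lt. \<Sum>q\<in>chan_idx lr lt.
      Amat lr lt n s Sig p q * s (snd p) k1 * cnj (s (snd q) k2) * y (fst q) k2 * cnj (y (fst p) k1))"

definition Gf :: "nat \<Rightarrow> nat \<Rightarrow> nat \<Rightarrow> (nat \<Rightarrow> nat \<Rightarrow> complex)
    \<Rightarrow> (nat \<times> nat \<Rightarrow> nat \<times> nat \<Rightarrow> complex) \<Rightarrow> (nat \<times> nat \<Rightarrow> complex)
    \<Rightarrow> (nat \<Rightarrow> nat \<Rightarrow> complex) \<Rightarrow> complex \<Rightarrow> complex" where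
  "Gf lr lt n s Sig mu y z =
     (\<Sum>k=1..n. 2 * betaK lr lt n s Sig mu y k * exp ((\<i> * of_real (2 * pi * (real k - 1))) * z))
   + (\<Sum>k1=1..n. \<Sum>k2=1..n. Ck lr lt n s Sig y k1 k2 * exp ((\<i> * of_real (2 * pi * (real k1 - real k2))) * z))"

definition Gd :: "nat \<Rightarrow> nat \<Rightarrow> nat \<Rightarrow> (nat \<Rightarrow> nat \<Rightarrow> complex)
    \<Rightarrow> (nat \<times> nat \<Rightarrow> nat \<times> nat \<Rightarrow> complex) \<Rightarrow> (nat \<times> nat \<Rightarrow> complex)
    \<Rightarrow> (nat \<Rightarrow> nat \<Rightarrow> complex) \<Rightarrow> complex \<Rightarrow> complex" where
  "Gd lr lt n s Sig mu y z =
     (\<Sum>k=1..n. 2 * betaK lr lt n s Sig mu y k * ((\<i> * of_real (2 * pi * (real k - 1))) * exp ((\<i> * of_real (2 * pi * (real k - 1))) * z)))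
   + (\<Sum>k1=1..n. \<Sum>k2=1..n. Ck lr lt n s Sig y k1 k2 * ((\<i> * of_real (2 * pi * (real k1 - real k2))) * exp ((\<i> * of_real (2 * pi * (real k1 - real k2))) * z)))"

lemma expd: "((\<lambda>z. a * exp (c * z)) has_field_derivative a * (c * exp (c * z))) (at (z::complex))"
  by (auto intro!: derivative_eq_intros)

lemma Gf_deriv: "(Gf lr lt n s Sig mu y has_field_derivative Gd lr lt n s Sig mu y z) (at z)"
  unfolding Gf_def[abs_def] Gd_def
  by (intro DERIV_add DERIV_sum expd)

lemma E1: "k \<ge> 1 \<Longrightarrow> exp (\<i> * complex_of_real (2 * pi * f * real (k - 1))) = exp ((\<i> * of_real (2 * pi * (real k - 1))) * of_real f)"
  by (simp add: of_nat_diff algebra_simps)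

lemma cnj_exp_i: "cnj (exp (\<i> * complex_of_real x)) = exp (- (\<i> * complex_of_real x))"
  by (simp add: exp_cnj)

lemma E_mul: "k1 \<ge> 1 \<Longrightarrow> k2 \<ge> 1 \<Longrightarrow>
  exp (\<i> * complex_of_real (2 * pi * f * real (k1 - 1))) * cnj (exp (\<i> * complex_of_real (2 * pi * f * real (k2 - 1))))
  = exp ((\<i> * of_real (2 * pi * (real k1 - real k2))) * of_real f)"
  unfolding cnj_exp_i exp_add[symmetric] by (simp add: of_nat_diff algebra_simps)

lemma term1:
  "2 * Re (\<Sum>p\<in>chan_idx lr lt. cnj (bvec lr lt n s Sig mu p) * Xhy n s y f p)
   = Re (\<Sum>k=1..n. 2 * betaK lr lt n s Sig mu y k * exp ((\<i> * of_real (2 * pi * (real k - 1))) * of_real f))"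
proof -
  define E where "E k = exp (\<i> * complex_of_real (2 * pi * f * real (k - 1)))" for k :: nat
  define I where "I = chan_idx lr lt"
  define b where "b = bvec lr lt n s Sig mu"
  have "cnj (\<Sum>p\<in>I. cnj (b p) * Xhy n s y f p) = (\<Sum>p\<in>I. \<Sum>k=1..n. b p * (E k * s (snd p) k * cnj (y (fst p) k)))"
    by (simp add: Xhy_def sum_distrib_left E_def)
  also have "\<dots> = (\<Sum>k=1..n. \<Sum>p\<in>I. b p * (E k * s (snd p) k * cnj (y (fst p) k)))" by (rule sum.swap)
  also have "\<dots> = (\<Sum>k=1..n. E k * betaK lr lt n s Sig mu y k)"
    by (intro sum.cong refl) (simp add: betaK_def sum_distrib_left I_def b_def mult.commute mult.left_commute)
  also have "\<dots> = (\<Sum>k=1..n. betaK lr lt n s Sig mu y k * exp ((\<i> * of_real (2 * pi * (real k - 1))) * of_real f))"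
  proof (rule sum.cong[OF refl])
    fix k assume "k \<in> {1..n}"
    hence "E k = exp ((\<i> * of_real (2 * pi * (real k - 1))) * of_real f)" unfolding E_def by (intro E1) auto
    thus "E k * betaK lr lt n s Sig mu y k = betaK lr lt n s Sig mu y k * exp ((\<i> * of_real (2 * pi * (real k - 1))) * of_real f)"
      by (simp only: mult.commute)
  qed
  finally have eq: "cnj (\<Sum>p\<in>I. cnj (b p) * Xhy n s y f p) = \<dots>" .
  have "2 * Re (\<Sum>p\<in>I. cnj (b p) * Xhy n s y f p) = 2 * Re (cnj (\<Sum>p\<in>I. cnj (b p) * Xhy n s y f p))"
    by simp
  also have "\<dots> = Re (\<Sum>k=1..n. 2 * betaK lr lt n s Sig mu y k * exp ((\<i> * of_real (2 * pi * (real k - 1))) * of_real f))"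
    unfolding eq by (simp add: sum_distrib_left[symmetric] mult.assoc)
  finally show ?thesis unfolding I_def b_def .
qed

lemma term2:
  "(\<Sum>p\<in>chan_idx lr lt. \<Sum>q\<in>chan_idx lr lt. cnj (Xhy n s y f p) * Amat lr lt n s Sig p q * Xhy n s y f q)
   = (\<Sum>k1=1..n. \<Sum>k2=1..n. Ck lr lt n s Sig y k1 k2 * exp ((\<i> * of_real (2 * pi * (real k1 - real k2))) * of_real f))"
proof -
  define E where "E k = exp (\<i> * complex_of_real (2 * pi * f * real (k - 1)))" for k :: nat
  define I where "I = chan_idx lr lt"
  define A where "A = Amat lr lt n s Sig"
  have cX: "cnj (Xhy n s y f p) = (\<Sum>k1=1..n. E k1 * s (snd p) k1 * cnj (y (fst p) k1))" for p
    by (simp add: Xhy_def E_def)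
  have X: "Xhy n s y f q = (\<Sum>k2=1..n. cnj (E k2) * cnj (s (snd q) k2) * y (fst q) k2)" for q
    by (simp add: Xhy_def E_def)
  have "(\<Sum>p\<in>I. \<Sum>q\<in>I. cnj (Xhy n s y f p) * A p q * Xhy n s y f q)
      = (\<Sum>p\<in>I. \<Sum>q\<in>I. \<Sum>k1=1..n. \<Sum>k2=1..n. (E k1 * s (snd p) k1 * cnj (y (fst p) k1)) * A p q * (cnj (E k2) * cnj (s (snd q) k2) * y (fst q) k2))"
    unfolding cX unfolding X sum3 ..
  also have "\<dots> = (\<Sum>k1=1..n. \<Sum>k2=1..n. \<Sum>p\<in>I. \<Sum>q\<in>I. (E k1 * s (snd p) k1 * cnj (y (fst p) k1)) * A p q * (cnj (E k2) * cnj (s (snd q) k2) * y (fst q) k2))"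
    by (rule swap4)
  also have "\<dots> = (\<Sum>k1=1..n. \<Sum>k2=1..n. (E k1 * cnj (E k2)) * Ck lr lt n s Sig y k1 k2)"
    by (intro sum.cong refl) (simp add: Ck_def sum_distrib_left I_def A_def ac_simps)
  also have "\<dots> = (\<Sum>k1=1..n. \<Sum>k2=1..n. Ck lr lt n s Sig y k1 k2 * exp ((\<i> * of_real (2 * pi * (real k1 - real k2))) * of_real f))"
  proof (rule sum.cong[OF refl], rule sum.cong[OF refl])
    fix k1 k2 assume "k1 \<in> {1..n}" "k2 \<in> {1..n}"
    hence "E k1 * cnj (E k2) = exp ((\<i> * of_real (2 * pi * (real k1 - real k2))) * of_real f)" unfolding E_def by (intro E_mul) auto
    thus "E k1 * cnj (E k2) * Ck lr lt n s Sig y k1 k2 = Ck lr lt n s Sig y k1 k2 * exp ((\<i> * of_real (2 * pi * (real k1 - real k2))) * of_real f)"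
      by (simp only: mult.commute)
  qed
  finally show ?thesis unfolding I_def A_def .
qed

lemma gfun_eq:
  "gfun lr lt n s Sig mu muf sf2 y f = Re (Gf lr lt n s Sig mu y (of_real f)) - 1/2 * (1/sf2) * (f - muf)^2"
  unfolding gfun_def Gf_def term1 term2 by simp

lemma Ck_sym:
  assumes "herm_pos_def (chan_idx lr lt) Sig"
  shows "Ck lr lt n s Sig y b a = cnj (Ck lr lt n s Sig y a b)"
proof -
  define I where "I = chan_idx lr lt"
  define A where "A = Amat lr lt n s Sig"
  have h: "\<And>p q. p \<in> I \<Longrightarrow> q \<in> I \<Longrightarrow> A p q = cnj (A q p)"
    unfolding I_def A_def using A_herm[OF assms] by blast
  have "cnj (Ck lr lt n s Sig y a b) = (\<Sum>p\<in>I. \<Sum>q\<in>I. cnj (A p q) * cnj (s (snd p) a) * s (snd q) b * cnj (y (fst q) b) * y (fst p) a)"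
    by (simp add: Ck_def I_def A_def)
  also have "\<dots> = (\<Sum>q\<in>I. \<Sum>p\<in>I. cnj (A p q) * cnj (s (snd p) a) * s (snd q) b * cnj (y (fst q) b) * y (fst p) a)"
    by (rule sum.swap)
  also have "\<dots> = (\<Sum>q\<in>I. \<Sum>p\<in>I. A q p * s (snd q) b * cnj (s (snd p) a) * y (fst p) a * cnj (y (fst q) b))"
  proof (rule sum.cong[OF refl], rule sum.cong[OF refl])
    fix q p assume "q \<in> I" "p \<in> I"
    hence "A q p = cnj (A p q)" by (rule h)
    thus "cnj (A p q) * cnj (s (snd p) a) * s (snd q) b * cnj (y (fst q) b) * y (fst p) a =
          A q p * s (snd q) b * cnj (s (snd p) a) * y (fst p) a * cnj (y (fst q) b)"
      by (simp add: ac_simps)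
  qed
  also have "\<dots> = Ck lr lt n s Sig y b a" by (simp add: Ck_def I_def A_def)
  finally show ?thesis by simp
qed

lemma Re_Gd:
  assumes pd: "herm_pos_def (chan_idx lr lt) Sig" and n1: "n \<ge> 1"
  shows "Re (Gd lr lt n s Sig mu y (of_real f)) =
     - 4 * pi * Im (\<Sum>k=1..n-1. exp (\<i> * complex_of_real (2 * pi * f * real k)) * of_nat k * zcoef lr lt n s Sig mu y k)"
proof -
  define bt where "bt = betaK lr lt n s Sig mu y"
  define C where "C = Ck lr lt n s Sig y"
  define e where "e d = exp ((\<i> * of_real (2 * pi * d)) * of_real f)" for d :: real
  define ek where "ek k = exp (\<i> * complex_of_real (2 * pi * f * real k))" for k :: nat
  define W where "W a b = of_real (real a - real b) * e (real a - real b) * C a b" for a b :: nat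
  define S1 where "S1 = (\<Sum>k=1..n. of_real (real k - 1) * e (real k - 1) * bt k)"
  define S2 where "S2 = (\<Sum>a=1..n. \<Sum>b=1..n. W a b)"
  have g1: "(\<Sum>k=1..n. 2 * bt k * ((\<i> * of_real (2 * pi * (real k - 1))) * exp ((\<i> * of_real (2 * pi * (real k - 1))) * of_real f)))
      = \<i> * of_real (4 * pi) * S1"
    unfolding S1_def sum_distrib_left by (intro sum.cong refl) (simp add: e_def algebra_simps)
  have g2: "(\<Sum>a=1..n. \<Sum>b=1..n. C a b * ((\<i> * of_real (2 * pi * (real a - real b))) * exp ((\<i> * of_real (2 * pi * (real a - real b))) * of_real f)))
      = \<i> * of_real (2 * pi) * S2"
    unfolding S2_def sum_distrib_left by (intro sum.cong refl) (simp add: e_def W_def algebra_simps)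
  have GdE: "Gd lr lt n s Sig mu y (of_real f) = \<i> * of_real (4 * pi) * S1 + \<i> * of_real (2 * pi) * S2"
    unfolding Gd_def bt_def[symmetric] C_def[symmetric] g1 g2 ..
  have ReGd: "Re (Gd lr lt n s Sig mu y (of_real f)) = - 4 * pi * Im S1 - 2 * pi * Im S2"
    unfolding GdE by simp
  define g where "g k = of_real (real k - 1) * e (real k - 1) * bt k" for k
  have "S1 = (\<Sum>k=Suc 0..Suc (n-1). g k)" unfolding S1_def g_def using n1 by simp
  also have "\<dots> = (\<Sum>k=0..n-1. g (Suc k))" by (rule sum.shift_bounds_cl_Suc_ivl)
  also have "\<dots> = g (Suc 0) + (\<Sum>k=1..n-1. g (Suc k))" by (simp add: sum.atLeast_Suc_atMost)
  also have "\<dots> = (\<Sum>k=1..n-1. of_nat k * ek k * bt (k + 1))"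
    by (simp add: g_def e_def ek_def algebra_simps)
  finally have S1E: "S1 = (\<Sum>k=1..n-1. of_nat k * ek k * bt (k + 1))" .
  have Wsym: "W b a = - cnj (W a b)" for a b
  proof -
    have c: "C b a = cnj (C a b)" unfolding C_def by (rule Ck_sym[OF pd])
    have ee: "e (real b - real a) = cnj (e (real a - real b))"
      unfolding e_def exp_cnj by (simp add: algebra_simps)
    have "W b a = of_real (real b - real a) * cnj (e (real a - real b)) * cnj (C a b)"
      unfolding W_def c ee ..
    also have "\<dots> = - cnj (W a b)" unfolding W_def by (simp add: algebra_simps)
    finally show ?thesis .
  qed
  have "Im S2 = (\<Sum>a=1..n. \<Sum>b=1..n. Im (W a b))" unfolding S2_def by simp
  also have "\<dots> = 2 * (\<Sum>k=1..n-1. \<Sum>a=k+1..n. Im (W a (a - k)))"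
  proof (rule sym_sum)
    fix a b show "Im (W a b) = Im (W b a)" unfolding Wsym[of a b] by simp
  next
    fix a show "Im (W a a) = 0" unfolding W_def by simp
  qed
  also have "(\<Sum>k=1..n-1. \<Sum>a=k+1..n. Im (W a (a - k))) = Im (\<Sum>k=1..n-1. of_nat k * ek k * (\<Sum>a=k+1..n. C a (a - k)))"
    unfolding Im_sum sum_distrib_left
  proof (rule sum.cong[OF refl], rule sum.cong[OF refl])
    fix k a assume "a \<in> {k+1..n}"
    hence ka: "k \<le> a" by simp
    have r: "real a - real (a - k) = real k" using ka by (simp add: of_nat_diff)
    have ee: "e (real k) = ek k" unfolding e_def ek_def by (simp add: ac_simps)
    show "Im (W a (a - k)) = Im (of_nat k * ek k * C a (a - k))"
      unfolding W_def r ee by simp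
  qed
  finally have S2E: "Im S2 = 2 * Im (\<Sum>k=1..n-1. of_nat k * ek k * (\<Sum>a=k+1..n. C a (a - k)))" .
  have zE: "zcoef lr lt n s Sig mu y k = bt (k + 1) + (\<Sum>a=k+1..n. C a (a - k))" for k
    unfolding zcoef_def bt_def betaK_def C_def Ck_def by (simp add: ac_simps)
  have "(\<Sum>k=1..n-1. ek k * of_nat k * zcoef lr lt n s Sig mu y k)
      = (\<Sum>k=1..n-1. of_nat k * ek k * bt (k + 1)) + (\<Sum>k=1..n-1. of_nat k * ek k * (\<Sum>a=k+1..n. C a (a - k)))"
    unfolding zE sum.distrib[symmetric] by (intro sum.cong refl) (simp add: algebra_simps)
  hence "Im (\<Sum>k=1..n-1. ek k * of_nat k * zcoef lr lt n s Sig mu y k) = Im S1 + Im S2 / 2"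
    unfolding S1E S2E by simp
  thus ?thesis unfolding ReGd ek_def by (simp add: algebra_simps)
qed

lemma g_deriv:
  assumes pd: "herm_pos_def (chan_idx lr lt) Sig" and n1: "n \<ge> 1"
  shows "((gfun lr lt n s Sig mu muf sf2 y) has_real_derivative
              (- 4 * pi * Im (\<Sum>k=1..n-1. exp (\<i> * complex_of_real (2 * pi * f * real k))
                                    * of_nat k * zcoef lr lt n s Sig mu y k)
               - (1 / sf2) * (f - muf))) (at f)"
proof -
  have geq: "gfun lr lt n s Sig mu muf sf2 y = (\<lambda>x. Re (Gf lr lt n s Sig mu y (of_real x)) - 1/2 * (1/sf2) * (x - muf)^2)"
    by (rule ext) (rule gfun_eq)
  have d1: "((\<lambda>x. Re (Gf lr lt n s Sig mu y (of_real x))) has_real_derivative Re (Gd lr lt n s Sig mu y (of_real f))) (at f)"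
    by (rule has_field_derivative_Re[OF has_vector_derivative_real_field[OF Gf_deriv]])
  have h: "((\<lambda>x. (x - muf)^2) has_real_derivative 2 * (f - muf)) (at f)"
    by (auto intro!: derivative_eq_intros)
  have e: "1/2 * (1/sf2) * (2 * (f - muf)) = (1 / sf2) * (f - muf)" by (cases "sf2 = 0") (simp_all add: field_simps)
  have d2: "((\<lambda>x. 1/2 * (1/sf2) * (x - muf)^2) has_real_derivative (1 / sf2) * (f - muf)) (at f)"
    using DERIV_cmult[OF h, of "1/2 * (1/sf2)"] unfolding e .
  show ?thesis unfolding geq Re_Gd[OF pd n1, symmetric] by (rule DERIV_diff[OF d1 d2])
qed

theorem theorem3:
  fixes lt lr n :: nat
    and s :: "nat \<Rightarrow> nat \<Rightarrow> complex"
    and Sig :: "nat \<times> nat \<Rightarrow> nat \<times> nat \<Rightarrow> complex"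
    and mu :: "nat \<times> nat \<Rightarrow> complex"
    and muf sf2 :: real
    and y :: "nat \<Rightarrow> nat \<Rightarrow> complex"
  assumes "lt \<ge> 1" and "lr \<ge> 1" and "n \<ge> 1"
    and "herm_pos_def (chan_idx lr lt) Sig"
    and "sf2 > 0"
  shows "(\<forall>f::real.
           ((gfun lr lt n s Sig mu muf sf2 y) has_real_derivative
              (- 4 * pi * Im (\<Sum>k=1..n-1. exp (\<i> * complex_of_real (2 * pi * f * real k))
                                    * of_nat k * zcoef lr lt n s Sig mu y k)
               - (1 / sf2) * (f - muf))) (at f)
         \<and> (\<forall>(rr::nat \<Rightarrow> real) (th::nat \<Rightarrow> real).
              (\<forall>k\<in>{1..n-1}. rr k \<ge> 0 \<and>
                  zcoef lr lt n s Sig mu y k = complex_of_real (rr k) * exp (- \<i> * complex_of_real (th k)))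
              \<longrightarrow>
              - 4 * pi * Im (\<Sum>k=1..n-1. exp (\<i> * complex_of_real (2 * pi * f * real k))
                                    * of_nat k * zcoef lr lt n s Sig mu y k)
               - (1 / sf2) * (f - muf)
              = - 4 * pi * (\<Sum>k=1..n-1. real k * rr k * sin (2 * pi * real k * (f - th k / (2 * pi * real k))))
               - (1 / sf2) * (f - muf)))
       \<and> (\<forall>f0::real. (\<forall>f::real. gfun lr lt n s Sig mu muf sf2 y f \<le> gfun lr lt n s Sig mu muf sf2 y f0)
           \<longrightarrow> deriv (gfun lr lt n s Sig mu muf sf2 y) f0 = 0)"
proof (intro conjI allI impI)
  fix f :: real
  show "((gfun lr lt n s Sig mu muf sf2 y) has_real_derivative
              (- 4 * pi * Im (\<Sum>k=1..n-1. exp (\<i> * complex_of_real (2 * pi * f * real k))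
                                    * of_nat k * zcoef lr lt n s Sig mu y k)
               - (1 / sf2) * (f - muf))) (at f)"
    by (rule g_deriv[OF assms(4,3)])
next
  fix f :: real and rr th :: "nat \<Rightarrow> real"
  assume H: "\<forall>k\<in>{1..n-1}. rr k \<ge> 0 \<and>
                  zcoef lr lt n s Sig mu y k = complex_of_real (rr k) * exp (- \<i> * complex_of_real (th k))"
  have "Im (\<Sum>k=1..n-1. exp (\<i> * complex_of_real (2 * pi * f * real k)) * of_nat k * zcoef lr lt n s Sig mu y k)
      = (\<Sum>k=1..n-1. real k * rr k * sin (2 * pi * real k * (f - th k / (2 * pi * real k))))"
    unfolding Im_sum
  proof (rule sum.cong[OF refl])
    fix k assume k: "k \<in> {1..n-1}"
    hence z: "zcoef lr lt n s Sig mu y k = complex_of_real (rr k) * exp (- \<i> * complex_of_real (th k))" using H by blast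
    have k0: "real k \<noteq> 0" using k by simp
    have arg: "2 * pi * real k * (f - th k / (2 * pi * real k)) = 2 * pi * f * real k - th k"
      using k0 by (simp add: field_simps)
    have q: "exp (\<i> * complex_of_real (2 * pi * f * real k)) * of_nat k * zcoef lr lt n s Sig mu y k
        = complex_of_real (real k * rr k) * exp (\<i> * complex_of_real (2 * pi * f * real k - th k))"
    proof -
      have e: "exp (\<i> * complex_of_real a) * exp (- \<i> * complex_of_real t) = exp (\<i> * complex_of_real (a - t))" for a t
        unfolding exp_add[symmetric] by (simp add: algebra_simps)
      have "exp (\<i> * complex_of_real (2 * pi * f * real k)) * of_nat k * zcoef lr lt n s Sig mu y k
         = complex_of_real (real k * rr k) * (exp (\<i> * complex_of_real (2 * pi * f * real k)) * exp (- \<i> * complex_of_real (th k)))"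
        unfolding z by simp
      thus ?thesis unfolding e .
    qed
    have "Im (complex_of_real (real k * rr k) * exp (\<i> * complex_of_real (2 * pi * f * real k - th k)))
        = real k * rr k * sin (2 * pi * f * real k - th k)"
      unfolding cis_conv_exp[symmetric] by simp
    thus "Im (exp (\<i> * complex_of_real (2 * pi * f * real k)) * of_nat k * zcoef lr lt n s Sig mu y k)
        = real k * rr k * sin (2 * pi * real k * (f - th k / (2 * pi * real k)))"
      unfolding arg q .
  qed
  thus "- 4 * pi * Im (\<Sum>k=1..n-1. exp (\<i> * complex_of_real (2 * pi * f * real k))
                                    * of_nat k * zcoef lr lt n s Sig mu y k)
               - (1 / sf2) * (f - muf)
              = - 4 * pi * (\<Sum>k=1..n-1. real k * rr k * sin (2 * pi * real k * (f - th k / (2 * pi * real k))))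
               - (1 / sf2) * (f - muf)" by simp
next
  fix f0 :: real
  assume M: "\<forall>f::real. gfun lr lt n s Sig mu muf sf2 y f \<le> gfun lr lt n s Sig mu muf sf2 y f0"
  have D: "((gfun lr lt n s Sig mu muf sf2 y) has_real_derivative
              (- 4 * pi * Im (\<Sum>k=1..n-1. exp (\<i> * complex_of_real (2 * pi * f0 * real k))
                                    * of_nat k * zcoef lr lt n s Sig mu y k)
               - (1 / sf2) * (f0 - muf))) (at f0)"
    by (rule g_deriv[OF assms(4,3)])
  have "(- 4 * pi * Im (\<Sum>k=1..n-1. exp (\<i> * complex_of_real (2 * pi * f0 * real k))
                                    * of_nat k * zcoef lr lt n s Sig mu y k)
               - (1 / sf2) * (f0 - muf)) = 0"
    by (rule DERIV_local_max[OF D, of 1]) (use M in auto)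
  thus "deriv (gfun lr lt n s Sig mu muf sf2 y) f0 = 0" using DERIV_imp_deriv[OF D] by simp
qed

end
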